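(* Let $S_2$ be the two-dimensional Lie triple system with basis $e,f$ and products $[e,f,e]=2e$, $[e,f,f]=-2f$ (over a field of characteristic $0$). Then in $U(S_2)$, for every $n\ge1$, $$e^nf-fe^n=n(n-1)\,e^{n-1},$$ where $e^n=e(e(\cdots(ee)\cdots))$ ($n$ factors) and $e^0=1$.
   Context: A Lie triple system (L.t.s.) is a vector space $V$ with trilinear product $[\cdot,\cdot,\cdot]$ satisfying $[a,a,b]=0$, $[a,b,c]+[b,c,a]+[c,a,b]=0$, $[x,y,[a,b,c]]=[[x,y,a],b,c]+[a,[x,y,b],c]+[a,b,[x,y,c]]$ (so the products of $S_2$ determine the rest by these identities). The universal enveloping algebra $U(V)$ (in the sense of Pérez-Izquierdo, $V$ viewed as a Bol algebra with zero binary bracket) is a unital non-associative bialgebra generated as a unital algebra by $V\subseteq U(V)$ ($V$ = primitive elements), satisfying $\sum a_{(1)}(y(a_{(2)}z))=\sum (a_{(1)}(ya_{(2)}))z$; in particular, for $a,b,c\in V$, $ab=ba$, $a(bc)-b(ac)=[a,b,c]$, and for $a,b\in V$ the map $x\mapsto a(bx)-b(ax)$ is a derivation of $U(V)$. *)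

theory Defs
  imports Complex_Main
begin

definition bilinear_op ::
  "('k::field \<Rightarrow> 'a::ab_group_add \<Rightarrow> 'a) \<Rightarrow> ('a \<Rightarrow> 'a \<Rightarrow> 'a) \<Rightarrow> bool" where
  "bilinear_op sc m \<longleftrightarrow>
     (\<forall>x y z. m (x + y) z = m x z + m y z) \<and>
     (\<forall>x y z. m x (y + z) = m x y + m x z) \<and>
     (\<forall>c x y. m (sc c x) y = sc c (m x y)) \<and>
     (\<forall>c x y. m x (sc c y) = sc c (m x y))"

definition unital_algebra ::
  "('k::field \<Rightarrow> 'a::ab_group_add \<Rightarrow> 'a) \<Rightarrow> ('a \<Rightarrow> 'a \<Rightarrow> 'a) \<Rightarrow> 'a \<Rightarrow> bool" where
  "unital_algebra sc m u \<longleftrightarrow> module sc \<and> bilinear_op sc m \<and> (\<forall>x. m u x = x \<and> m x u = x)"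

text \<open>Elements of the tensor products A\<otimes>A and A\<otimes>A\<otimes>A are represented by finite lists
  of pure tensors.  Two such representatives denote the same tensor iff they agree on all
  bilinear (resp. trilinear) forms A \<times> A \<rightarrow> k (this is the standard description of equality
  of tensors over a field).\<close>

definition bilinear_form :: "('k::field \<Rightarrow> 'a::ab_group_add \<Rightarrow> 'a) \<Rightarrow> ('a \<Rightarrow> 'a \<Rightarrow> 'k) \<Rightarrow> bool" where
  "bilinear_form sc \<beta> \<longleftrightarrow>
     (\<forall>x y z. \<beta> (x + y) z = \<beta> x z + \<beta> y z) \<and>
     (\<forall>x y z. \<beta> x (y + z) = \<beta> x y + \<beta> x z) \<and>
     (\<forall>c x y. \<beta> (sc c x) y = c * \<beta> x y) \<and>
     (\<forall>c x y. \<beta> x (sc c y) = c * \<beta> x y)"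

definition trilinear_form ::
  "('k::field \<Rightarrow> 'a::ab_group_add \<Rightarrow> 'a) \<Rightarrow> ('a \<Rightarrow> 'a \<Rightarrow> 'a \<Rightarrow> 'k) \<Rightarrow> bool" where
  "trilinear_form sc \<gamma> \<longleftrightarrow>
     (\<forall>z. bilinear_form sc (\<lambda>x y. \<gamma> x y z)) \<and>
     (\<forall>x. bilinear_form sc (\<lambda>y z. \<gamma> x y z))"

definition teval :: "('a \<Rightarrow> 'a \<Rightarrow> 'b::comm_monoid_add) \<Rightarrow> ('a \<times> 'a) list \<Rightarrow> 'b" where
  "teval \<beta> T = sum_list (map (\<lambda>(p, q). \<beta> p q) T)"

definition teq ::
  "('k::field \<Rightarrow> 'a::ab_group_add \<Rightarrow> 'a) \<Rightarrow> ('a \<times> 'a) list \<Rightarrow> ('a \<times> 'a) list \<Rightarrow> bool" where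
  "teq sc T1 T2 \<longleftrightarrow> (\<forall>\<beta>. bilinear_form sc \<beta> \<longrightarrow> teval \<beta> T1 = teval \<beta> T2)"

definition tmul :: "('a \<Rightarrow> 'a \<Rightarrow> 'a) \<Rightarrow> ('a \<times> 'a) list \<Rightarrow> ('a \<times> 'a) list \<Rightarrow> ('a \<times> 'a) list" where
  "tmul m T1 T2 = concat (map (\<lambda>(a, b). map (\<lambda>(c, d). (m a c, m b d)) T2) T1)"

text \<open>The coproduct
  is given by a chosen representative \<Delta> x of \<Delta>(x) \<in> A\<otimes>A.\<close>

definition cocomm_bialgebra ::
  "('k::field \<Rightarrow> 'a::ab_group_add \<Rightarrow> 'a) \<Rightarrow> ('a \<Rightarrow> 'a \<Rightarrow> 'a) \<Rightarrow> 'a \<Rightarrow>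
   ('a \<Rightarrow> ('a \<times> 'a) list) \<Rightarrow> ('a \<Rightarrow> 'k) \<Rightarrow> bool" where
  "cocomm_bialgebra sc m u \<Delta> \<epsilon> \<longleftrightarrow>
     unital_algebra sc m u \<and>
     \<comment> \<open>\<Delta> linear\<close>
     (\<forall>x y. teq sc (\<Delta> (x + y)) (\<Delta> x @ \<Delta> y)) \<and>
     (\<forall>c x. teq sc (\<Delta> (sc c x)) (map (\<lambda>(p, q). (sc c p, q)) (\<Delta> x))) \<and>
     \<comment> \<open>\<epsilon> linear\<close>
     (\<forall>x y. \<epsilon> (x + y) = \<epsilon> x + \<epsilon> y) \<and>
     (\<forall>c x. \<epsilon> (sc c x) = c * \<epsilon> x) \<and>
     \<comment> \<open>coassociativity\<close>
     (\<forall>x \<gamma>. trilinear_form sc \<gamma> \<longrightarrow>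
        teval (\<lambda>p q. teval (\<lambda>r s. \<gamma> r s q) (\<Delta> p)) (\<Delta> x) =
        teval (\<lambda>p q. teval (\<lambda>r s. \<gamma> p r s) (\<Delta> q)) (\<Delta> x)) \<and>
     \<comment> \<open>counit\<close>
     (\<forall>x. teval (\<lambda>p q. sc (\<epsilon> p) q) (\<Delta> x) = x) \<and>
     (\<forall>x. teval (\<lambda>p q. sc (\<epsilon> q) p) (\<Delta> x) = x) \<and>
     \<comment> \<open>cocommutativity\<close>
     (\<forall>x. teq sc (\<Delta> x) (map (\<lambda>(p, q). (q, p)) (\<Delta> x))) \<and>
     \<comment> \<open>\<Delta>, \<epsilon> are unital algebra morphisms\<close>
     (\<forall>x y. teq sc (\<Delta> (m x y)) (tmul m (\<Delta> x) (\<Delta> y))) \<and>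
     teq sc (\<Delta> u) [(u, u)] \<and>
     (\<forall>x y. \<epsilon> (m x y) = \<epsilon> x * \<epsilon> y) \<and>
     \<epsilon> u = 1"

definition primitive ::
  "('k::field \<Rightarrow> 'a::ab_group_add \<Rightarrow> 'a) \<Rightarrow> 'a \<Rightarrow> ('a \<Rightarrow> ('a \<times> 'a) list) \<Rightarrow> 'a \<Rightarrow> bool" where
  "primitive sc u \<Delta> x \<longleftrightarrow> teq sc (\<Delta> x) [(x, u), (u, x)]"

definition generated_by ::
  "('k::field \<Rightarrow> 'a::ab_group_add \<Rightarrow> 'a) \<Rightarrow> ('a \<Rightarrow> 'a \<Rightarrow> 'a) \<Rightarrow> 'a \<Rightarrow> 'a set \<Rightarrow> bool" where
  "generated_by sc m u V \<longleftrightarrow>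
     (\<forall>S. u \<in> S \<and> V \<subseteq> S \<and> (\<forall>x\<in>S. \<forall>y\<in>S. x + y \<in> S \<and> m x y \<in> S) \<and>
          (\<forall>c. \<forall>x\<in>S. sc c x \<in> S) \<longrightarrow> S = UNIV)"

text \<open>The defining data of U(S_2): a non-associative bialgebra A whose space of
  primitive elements is S_2 = span{e,f} (e, f linearly independent), which is generated
  by S_2, which satisfies the identity
  \<Sum> a_(1)(y(a_(2)z)) = \<Sum> (a_(1)(y a_(2)))z, and in which the Lie triple product of S_2
  ([e,f,e]=2e, [e,f,f]=-2f, and hence [e,e,-]=[f,f,-]=0, [f,e,-]=-[e,f,-]) is realized by
  a(bc)-b(ac) with ab=ba on S_2, and x \<mapsto> a(bx)-b(ax) is a derivation.\<close>

definition U_S2 ::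
  "('k::field \<Rightarrow> 'a::ab_group_add \<Rightarrow> 'a) \<Rightarrow> ('a \<Rightarrow> 'a \<Rightarrow> 'a) \<Rightarrow> 'a \<Rightarrow>
   ('a \<Rightarrow> ('a \<times> 'a) list) \<Rightarrow> ('a \<Rightarrow> 'k) \<Rightarrow> 'a \<Rightarrow> 'a \<Rightarrow> bool" where
  "U_S2 sc m u \<Delta> \<epsilon> e f \<longleftrightarrow>
     cocomm_bialgebra sc m u \<Delta> \<epsilon> \<and>
     (\<forall>a b. sc a e + sc b f = 0 \<longrightarrow> a = 0 \<and> b = 0) \<and>
     {x. primitive sc u \<Delta> x} = {sc a e + sc b f | a b. True} \<and>
     generated_by sc m u {sc a e + sc b f | a b. True} \<and>
     (\<forall>a y z. teval (\<lambda>p q. m p (m y (m q z))) (\<Delta> a) =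
              teval (\<lambda>p q. m (m p (m y q)) z) (\<Delta> a)) \<and>
     m e f = m f e \<and>
     m e (m f e) - m f (m e e) = e + e \<and>
     m e (m f f) - m f (m e f) = - (f + f) \<and>
     (\<forall>x y. m e (m f (m x y)) - m f (m e (m x y)) =
            m (m e (m f x) - m f (m e x)) y + m x (m e (m f y) - m f (m e y)))"

primrec npow :: "('a \<Rightarrow> 'a \<Rightarrow> 'a) \<Rightarrow> 'a \<Rightarrow> 'a \<Rightarrow> nat \<Rightarrow> 'a" where
  "npow m u x 0 = u"
| "npow m u x (Suc n) = m x (npow m u x n)"

end

theory Submission imports Defs begin
lemma sep:
  fixes sc :: "'k::field \<Rightarrow> 'a::ab_group_add \<Rightarrow> 'a"
  assumes "module sc" "x \<noteq> 0"
  shows "\<exists>g. (\<forall>a b. g (a + b) = g a + g b) \<and> (\<forall>c a. g (sc c a) = c * g a) \<and> g x = 1"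
proof -
  interpret V: vector_space sc using assms(1) by (simp add: module_iff_vector_space)
  interpret P: vector_space_pair sc "(*) :: 'k \<Rightarrow> 'k \<Rightarrow> 'k"
    by unfold_locales (auto simp: algebra_simps)
  have "V.independent {x}" using assms(2) by simp
  from P.linear_independent_extend[OF this, of "\<lambda>_. 1"] obtain g where
    g: "Vector_Spaces.linear sc (*) g" "g x = 1" by auto
  then show ?thesis
    by (intro exI[of _ g]) (auto simp: linear_iff_module_hom module_hom.add module_hom.scale)
qed

lemma g_teval:
  fixes g :: "'a::ab_group_add \<Rightarrow> 'b::ab_group_add"
  assumes "\<forall>a b. g (a + b) = g a + g b"
  shows "g (teval F T) = teval (\<lambda>p q. g (F p q)) T"
proof -
  have "g (0+0) = g 0 + g 0" using assms by blast
  then have g0: "g 0 = 0" by simp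
  show ?thesis
  proof (induction T)
    case Nil then show ?case by (simp add: teval_def g0)
  next
    case (Cons a T)
    then show ?case by (cases a) (simp add: teval_def assms)
  qed
qed
lemma transfer:
  fixes sc :: "'k::field \<Rightarrow> 'a::ab_group_add \<Rightarrow> 'a"
  assumes "module sc" "teq sc T [(e,u),(u,e)]" "bilinear_op sc F"
  shows "teval F T = F e u + F u e"
proof (rule ccontr)
  assume "teval F T \<noteq> F e u + F u e"
  then have "teval F T - (F e u + F u e) \<noteq> 0" by simp
  from sep[OF assms(1) this] obtain g where
    ga: "\<forall>a b. g (a + b) = g a + g b" and gs: "\<forall>c a. g (sc c a) = c * g a"
    and g1: "g (teval F T - (F e u + F u e)) = 1" by blast
  have gd: "g (a - b) = g a - g b" for a b
  proof -
    have "g a = g ((a - b) + b)" by simp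
    also have "\<dots> = g (a - b) + g b" using ga by blast
    finally show ?thesis by simp
  qed
  have "bilinear_form sc (\<lambda>p q. g (F p q))"
    using assms(3) unfolding bilinear_op_def bilinear_form_def by (simp add: ga gs)
  with assms(2) have "teval (\<lambda>p q. g (F p q)) T = teval (\<lambda>p q. g (F p q)) [(e,u),(u,e)]"
    unfolding teq_def by blast
  moreover have "teval (\<lambda>p q. g (F p q)) [(e,u),(u,e)] = g (F e u) + g (F u e)"
    by (simp add: teval_def)
  ultimately have "g (teval F T) = g (F e u) + g (F u e)"
    by (simp only: g_teval[OF ga])
  then have "g (teval F T - (F e u + F u e)) = 0"
    by (simp add: gd ga)
  with g1 show False by simp
qed

lemma nps: "npow m (m x z) x j = npow m z x (Suc j)"
  by (induction j) auto

theorem lemma3p1: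
  fixes sc :: "'k::field_char_0 \<Rightarrow> 'a::ab_group_add \<Rightarrow> 'a"
    and m :: "'a \<Rightarrow> 'a \<Rightarrow> 'a" and u :: 'a
    and \<Delta> :: "'a \<Rightarrow> ('a \<times> 'a) list" and \<epsilon> :: "'a \<Rightarrow> 'k"
    and e f :: 'a and n :: nat
  assumes "U_S2 sc m u \<Delta> \<epsilon> e f"
    and "n \<ge> 1"
  shows "m (npow m u e n) f - m f (npow m u e n) = sc (of_nat (n * (n - 1))) (npow m u e (n - 1))"
proof -
  from assms(1) have cb: "cocomm_bialgebra sc m u \<Delta> \<epsilon>"
    and prim: "{x. primitive sc u \<Delta> x} = {sc a e + sc b f | a b. True}"
    and idt: "\<forall>a y z. teval (\<lambda>p q. m p (m y (m q z))) (\<Delta> a) =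
              teval (\<lambda>p q. m (m p (m y q)) z) (\<Delta> a)"
    and efc: "m e f = m f e"
    and De: "m e (m f e) - m f (m e e) = e + e"
    and Der: "\<forall>x y. m e (m f (m x y)) - m f (m e (m x y)) =
            m (m e (m f x) - m f (m e x)) y + m x (m e (m f y) - m f (m e y))"
    unfolding U_S2_def by blast+
  from cb have "unital_algebra sc m u" by (simp add: cocomm_bialgebra_def)
  hence md: "module sc" "bilinear_op sc m" "\<forall>x. m u x = x \<and> m x u = x"
    unfolding unital_algebra_def by auto
  interpret M: module sc by (fact md(1))
  have ml: "m (x+y) z = m x z + m y z" "m x (y+z) = m x y + m x z"
    "m (sc c x) y = sc c (m x y)" "m x (sc c y) = sc c (m x y)" for x y z c
    using md(2) unfolding bilinear_op_def by auto
  have mdiff: "m x (y - z) = m x y - m x z" for x y z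
  proof -
    have "m x y = m x ((y - z) + z)" by simp
    also have "\<dots> = m x (y - z) + m x z" by (rule ml(2))
    finally show ?thesis by simp
  qed
  have mu: "m u x = x" "m x u = x" for x using md(3) by auto
  have "e \<in> {sc a e + sc b f | a b. True}"
    by (rule CollectI, rule exI[of _ 1], rule exI[of _ 0]) simp
  then have "primitive sc u \<Delta> e" using prim by blast
  then have T: "teq sc (\<Delta> e) [(e,u),(u,e)]" by (simp add: primitive_def)
  have A: "m e (m y z) + m y (m e z) = m (m e y) z + m (m y e) z" for y z
  proof -
    have b1: "bilinear_op sc (\<lambda>p q. m p (m y (m q z)))"
      unfolding bilinear_op_def by (simp add: ml)
    have b2: "bilinear_op sc (\<lambda>p q. m (m p (m y q)) z)"
      unfolding bilinear_op_def by (simp add: ml)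
    have "teval (\<lambda>p q. m p (m y (m q z))) (\<Delta> e) = teval (\<lambda>p q. m (m p (m y q)) z) (\<Delta> e)"
      using idt by blast
    then show ?thesis using transfer[OF md(1) T b1] transfer[OF md(1) T b2] by (simp add: mu)
  qed
  have half: "a = b" if h: "a + a = b + b" for a b :: 'a
  proof -
    have hh: "(1/2 + 1/2 :: 'k) = 1" by simp
    have "a = sc (1/2 + 1/2) a" by (simp only: hh M.scale_one)
    also have "\<dots> = sc (1/2) (a + a)" by (simp only: M.scale_left_distrib M.scale_right_distrib)
    also have "\<dots> = sc (1/2) (b + b)" by (simp only: h)
    also have "\<dots> = sc (1/2 + 1/2) b" by (simp only: M.scale_left_distrib M.scale_right_distrib)
    also have "\<dots> = b" by (simp only: hh M.scale_one)
    finally show ?thesis .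
  qed
  have P: "m (npow m u e k) z = npow m z e k" for k z
  proof (induction k arbitrary: z)
    case 0 show ?case by (simp add: mu)
  next
    case (Suc j)
    have ee: "m (npow m u e j) e = npow m u e (Suc j)"
      using Suc[of e] nps[of m e u j] by (simp add: mu)
    have "m e (m (npow m u e j) z) + m (npow m u e j) (m e z) =
          m (m e (npow m u e j)) z + m (m (npow m u e j) e) z" by (rule A)
    then have "npow m z e (Suc j) + npow m z e (Suc j) =
         m (npow m u e (Suc j)) z + m (npow m u e (Suc j)) z"
      using Suc[of z] Suc[of "m e z"] ee nps[of m e z j] by simp
    then show ?case using half by metis
  qed
  define D where "D x = m e (m f x) - m f (m e x)" for x
  have Dm: "D (m x y) = m (D x) y + m x (D y)" for x y
    using Der unfolding D_def by blast
  have Du: "D u = 0"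
    using Dm[of u u] by (simp add: mu)
  have DE: "D e = e + e" using De unfolding D_def .
  have Dn: "D (npow m u e k) = sc (of_nat (2*k)) (npow m u e k)" for k
  proof (induction k)
    case 0 show ?case by (simp add: Du)
  next
    case (Suc k)
    have "D (npow m u e (Suc k)) = m (e + e) (npow m u e k) + m e (sc (of_nat (2*k)) (npow m u e k))"
      using Dm[of e "npow m u e k"] Suc DE by simp
    also have "\<dots> = sc 1 (npow m u e (Suc k)) + sc 1 (npow m u e (Suc k)) + sc (of_nat (2*k)) (npow m u e (Suc k))"
      by (simp add: ml)
    also have "\<dots> = sc (1 + 1 + of_nat (2*k)) (npow m u e (Suc k))"
      by (simp only: M.scale_left_distrib)
    also have "(1 + 1 + of_nat (2*k) :: 'k) = of_nat (2 * Suc k)" by simp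
    finally show ?case .
  qed
  have F: "m f (npow m u e k) = npow m f e k - sc (of_nat (k*(k-1))) (npow m u e (k-1))" for k
  proof (induction k)
    case 0 show ?case by (simp add: mu)
  next
    case (Suc k)
    have s1: "m f (npow m u e (Suc k)) = m e (m f (npow m u e k)) - D (npow m u e k)"
      unfolding D_def by simp
    show ?case
    proof (cases k)
      case 0
      then show ?thesis using s1 Du efc by (simp add: mu)
    next
      case (Suc j)
      have "m f (npow m u e (Suc k)) = npow m f e (Suc k) - sc (of_nat (k*(k-1))) (npow m u e k)
              - sc (of_nat (2*k)) (npow m u e k)"
        using s1 Suc.IH Dn[of k] Suc by (simp add: mdiff ml)
      also have "\<dots> = npow m f e (Suc k) - sc (of_nat (k*(k-1)) + of_nat (2*k)) (npow m u e k)"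
        by (simp add: M.scale_left_distrib)
      also have "(of_nat (k*(k-1)) + of_nat (2*k) :: 'k) = of_nat (Suc k * (Suc k - 1))"
        using Suc by (simp add: algebra_simps)
      finally show ?thesis by simp
    qed
  qed
  show ?thesis using P[of n f] F[of n] by simp
qed

end
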